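(* Let $(X,d_X,\mu,T)$ and $(Y,d_Y,\nu,S)$ be compact metric measure-preserving systems, let $(a_r)_{r\ge1}$ be dense in $\operatorname{supp}\mu$ and $(b_r)_{r\ge1}$ dense in $\operatorname{supp}\nu$, and let $\lambda,\lambda'\in\mathcal J(T,S)$. If $\widetilde\Phi_{n,m,R}(\lambda)=\widetilde\Phi_{n,m,R}(\lambda')$ for all $n,m,R\ge1$, then $\lambda=\lambda'$.
   Context: A compact metric measure-preserving system $(X,d_X,\mu,T)$: $(X,d_X)$ compact metric, $\mu$ Borel probability, $T$ Borel with $T_\#\mu=\mu$. $\mathcal J(T,S)$: Borel probability measures on $X\times Y$ with marginals $\mu,\nu$ invariant under $T\times S$. For $z_i=(x_i,y_i)$, $\mathcal D^X_{n,m}=(d_X(T^ax_i,T^bx_j))_{1\le i,j\le n,0\le a,b<m}$. The anchored array is $\widetilde{\mathcal D}^X_{n,m,R}(z_1,\dots,z_n)=\bigl(\mathcal D^X_{n,m},(d_X(T^ax_i,a_r))_{1\le i\le n,0\le a<m,1\le r\le R}\bigr)$, and $\widetilde{\mathcal D}^Y_{n,m,R}$ is defined analogously using $d_Y$, $S$, and the anchors $b_r$. The anchored projection is $\widetilde\Phi_{n,m,R}(\lambda)=\mathrm{Law}_{\lambda^{\otimes n}}(\widetilde{\mathcal D}^X_{n,m,R},\widetilde{\mathcal D}^Y_{n,m,R})$. *)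

theory Defs
  imports "HOL-Probability.Probability"
begin

definition msupp :: "'a::metric_space measure \<Rightarrow> 'a set" where
  "msupp \<mu> = {x. \<forall>e>0. emeasure \<mu> (ball x e) > 0}"

definition cmmps :: "'a::metric_space measure \<Rightarrow> ('a \<Rightarrow> 'a) \<Rightarrow> bool" where
  "cmmps \<mu> T \<longleftrightarrow> compact (UNIV :: 'a set) \<and> prob_space \<mu> \<and> sets \<mu> = sets borel \<and>
     T \<in> borel \<rightarrow>\<^sub>M borel \<and> distr \<mu> borel T = \<mu>"

definition joinings ::
  "'a::metric_space measure \<Rightarrow> ('a \<Rightarrow> 'a) \<Rightarrow> 'b::metric_space measure \<Rightarrow> ('b \<Rightarrow> 'b)
     \<Rightarrow> ('a \<times> 'b) measure set" where
  "joinings \<mu> T \<nu> S = {L. prob_space L \<and> sets L = sets borel \<and>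
     distr L borel fst = \<mu> \<and> distr L borel snd = \<nu> \<and>
     distr L borel (map_prod T S) = L}"

text \<open>Indices of the entries of the anchored arrays (X-part and Y-part together):
  DX i j a b ~ d_X(T^a x_i, T^b x_j),  AX i a r ~ d_X(T^a x_i, a_r), and similarly for Y.\<close>
datatype arr_idx = DX nat nat nat nat | AX nat nat nat | DY nat nat nat nat | AY nat nat nat

definition arr_idxs :: "nat \<Rightarrow> nat \<Rightarrow> nat \<Rightarrow> arr_idx set" where
  "arr_idxs n m R =
     {DX i j p q | i j p q. i \<in> {1..n} \<and> j \<in> {1..n} \<and> p < m \<and> q < m}
   \<union> {AX i p r | i p r. i \<in> {1..n} \<and> p < m \<and> r \<in> {1..R}}
   \<union> {DY i j p q | i j p q. i \<in> {1..n} \<and> j \<in> {1..n} \<and> p < m \<and> q < m}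
   \<union> {AY i p r | i p r. i \<in> {1..n} \<and> p < m \<and> r \<in> {1..R}}"

definition anch_arrays ::
  "('a::metric_space \<Rightarrow> 'a) \<Rightarrow> ('b::metric_space \<Rightarrow> 'b) \<Rightarrow> (nat \<Rightarrow> 'a) \<Rightarrow> (nat \<Rightarrow> 'b)
     \<Rightarrow> nat \<Rightarrow> nat \<Rightarrow> nat \<Rightarrow> (nat \<Rightarrow> 'a \<times> 'b) \<Rightarrow> arr_idx \<Rightarrow> real" where
  "anch_arrays T S a b n m R z = (\<lambda>k\<in>arr_idxs n m R. case k of
       DX i j p q \<Rightarrow> dist ((T ^^ p) (fst (z i))) ((T ^^ q) (fst (z j)))
     | AX i p r \<Rightarrow> dist ((T ^^ p) (fst (z i))) (a r)
     | DY i j p q \<Rightarrow> dist ((S ^^ p) (snd (z i))) ((S ^^ q) (snd (z j)))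
     | AY i p r \<Rightarrow> dist ((S ^^ p) (snd (z i))) (b r))"

definition anch_proj ::
  "('a::metric_space \<Rightarrow> 'a) \<Rightarrow> ('b::metric_space \<Rightarrow> 'b) \<Rightarrow> (nat \<Rightarrow> 'a) \<Rightarrow> (nat \<Rightarrow> 'b)
     \<Rightarrow> nat \<Rightarrow> nat \<Rightarrow> nat \<Rightarrow> ('a \<times> 'b) measure \<Rightarrow> (arr_idx \<Rightarrow> real) measure" where
  "anch_proj T S a b n m R L =
     distr (PiM {1..n} (\<lambda>_. L)) (PiM (arr_idxs n m R) (\<lambda>_. borel))
       (anch_arrays T S a b n m R)"

end

theory Submission
  imports Defs
begin


lemma countable_dense_compact:
  fixes C :: "'c::metric_space set"
  assumes "compact C"
  obtains Q where "countable Q" "Q \<subseteq> C" "C \<subseteq> closure Q"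
proof -
  have "\<exists>D. finite D \<and> D \<subseteq> C \<and> C \<subseteq> (\<Union>x\<in>D. ball x (1 / Suc k))" for k
  proof -
    have "C \<subseteq> (\<Union>x\<in>C. ball x (1 / Suc k))" by auto
    then obtain D where "D \<subseteq> C" "finite D" "C \<subseteq> (\<Union>x\<in>D. ball x (1 / Suc k))"
      using compactE_image[OF assms, of C "\<lambda>x. ball x (1 / Suc k)"] by auto
    then show ?thesis by blast
  qed
  then obtain D where D: "\<And>k. finite (D k) \<and> D k \<subseteq> C \<and> C \<subseteq> (\<Union>x\<in>D k. ball x (1 / Suc k))"
    by metis
  show ?thesis
  proof (rule that[of "\<Union>k. D k"])
    show "countable (\<Union>k. D k)" using D by (auto intro: countable_finite)
    show "(\<Union>k. D k) \<subseteq> C" using D by auto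
    show "C \<subseteq> closure (\<Union>k. D k)"
    proof
      fix x assume x: "x \<in> C"
      show "x \<in> closure (\<Union>k. D k)"
        unfolding closure_approachable
      proof (intro allI impI)
        fix e :: real assume "e > 0"
        then obtain k where k: "1 / Suc k < e"
          by (metis nat_approx_posE)
        from D[of k] x obtain y where "y \<in> D k" "dist y x < 1 / Suc k"
          by (auto simp: dist_commute)
        then show "\<exists>y\<in>\<Union>k. D k. dist y x < e" using k by force
      qed
    qed
  qed
qed

lemma dist_anchor_inj:
  fixes x y :: "'c::metric_space"
  assumes "x \<in> closure (a ` {1..})" "\<And>r. r \<ge> 1 \<Longrightarrow> dist x (a r) = dist y (a r)"
  shows "x = y"
proof -
  have "dist x y < 2 * e" if "e > 0" for e
  proof -
    from assms(1) that obtain r where r: "r \<ge> 1" "dist (a r) x < e"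
      unfolding closure_approachable by auto
    have "dist x y \<le> dist x (a r) + dist y (a r)" by (metis dist_commute dist_triangle)
    also have "\<dots> = 2 * dist x (a r)" using assms(2)[OF r(1)] by simp
    finally show ?thesis using r by (simp add: dist_commute)
  qed
  have "dist x y \<le> 0"
  proof (rule ccontr)
    assume "\<not> dist x y \<le> 0"
    then have "dist x y / 2 > 0" by simp
    from this[THEN \<open>\<And>e. e > 0 \<Longrightarrow> dist x y < 2 * e\<close>] show False by simp
  qed
  then show ?thesis by simp
qed

lemma msupp_AE:
  fixes \<mu> :: "'c::metric_space measure"
  assumes "cmmps \<mu> T"
  shows "AE x in \<mu>. x \<in> msupp \<mu>"
proof -
  have cU: "compact (UNIV :: 'c set)" and sb: "sets \<mu> = sets borel"
    using assms by (auto simp: cmmps_def)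
  let ?U = "- msupp \<mu>"
  have U: "?U = {x. \<exists>e>0. emeasure \<mu> (ball x e) = 0}"
    by (auto simp: msupp_def)
  have cpt: "F \<in> null_sets \<mu>" if cF: "compact F" and FU: "F \<subseteq> ?U" for F
  proof -
    have "\<forall>x\<in>F. \<exists>e>0. emeasure \<mu> (ball x e) = 0" using FU U by auto
    then obtain e where e: "\<And>x. x \<in> F \<Longrightarrow> e x > 0 \<and> emeasure \<mu> (ball x (e x)) = 0"
      by metis
    have "F \<subseteq> (\<Union>x\<in>F. ball x (e x))" using e by force
    then obtain D where D: "D \<subseteq> F" "finite D" "F \<subseteq> (\<Union>x\<in>D. ball x (e x))"
      using compactE_image[OF cF, of F "\<lambda>x. ball x (e x)"] by auto
    have "(\<Union>x\<in>D. ball x (e x)) \<in> null_sets \<mu>"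
      using D e sb by (intro null_sets.finite_UN) (auto simp: null_sets_def)
    moreover have "F \<in> sets \<mu>" using sb cF by (simp add: compact_imp_closed)
    ultimately show ?thesis using D(3) null_sets_subset by blast
  qed
  define F where "F k = {x. \<forall>y\<in>msupp \<mu>. 1 / Suc k \<le> dist x y}" for k
  have oU: "open ?U"
    unfolding open_dist
  proof (intro ballI)
    fix x assume "x \<in> ?U"
    then obtain e where e: "e > 0" "emeasure \<mu> (ball x e) = 0" using U by auto
    show "\<exists>e>0. \<forall>y. dist y x < e \<longrightarrow> y \<in> ?U"
    proof (intro exI[of _ "e/2"] conjI allI impI)
      fix y assume "dist y x < e / 2"
      then have "ball y (e/2) \<subseteq> ball x e" by (auto simp: ball_def dist_commute intro: dist_triangle_half_l)
      then have "emeasure \<mu> (ball y (e/2)) \<le> emeasure \<mu> (ball x e)"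
        by (intro emeasure_mono) (auto simp: sb)
      then have "emeasure \<mu> (ball y (e/2)) = 0"
        using e by simp
      then show "y \<in> ?U" using U e by (auto intro!: exI[of _ "e/2"])
    qed (use e in simp)
  qed
  have "F k \<in> null_sets \<mu>" for k
  proof (rule cpt)
    have "F k = (\<Inter>y\<in>msupp \<mu>. - ball y (1 / Suc k))"
      by (auto simp: F_def dist_commute not_less)
    then have "closed (F k)"
      by (auto intro!: closed_INT)
    then show "compact (F k)" using cU compact_Int_closed[OF cU] by simp
    show "F k \<subseteq> ?U" by (auto simp: F_def)
  qed
  moreover have "?U = (\<Union>k. F k)"
  proof (intro equalityI subsetI)
    fix x assume "x \<in> ?U"
    then obtain e where "e > 0" "ball x e \<subseteq> ?U" using oU open_contains_ball by blast
    then obtain k where k: "1 / Suc k < e" by (metis nat_approx_posE)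
    show "x \<in> (\<Union>k. F k)"
    proof (intro UN_I[of k] UNIV_I)
      show "x \<in> F k" unfolding F_def
      proof safe
        fix y assume "y \<in> msupp \<mu>"
        then have "y \<notin> ball x e" using \<open>ball x e \<subseteq> ?U\<close> by auto
        then show "1 / Suc k \<le> dist x y" using k by simp
      qed
    qed
  qed (force simp: F_def)
  ultimately have "?U \<in> null_sets \<mu>" by auto
  then show ?thesis by (rule AE_not_in[THEN AE_mp]) auto
qed



definition gmap :: "(nat \<Rightarrow> 'a::metric_space) \<Rightarrow> (nat \<Rightarrow> 'b::metric_space) \<Rightarrow> nat \<Rightarrow> 'a \<times> 'b \<Rightarrow> arr_idx \<Rightarrow> real" where
  "gmap a b R p = (\<lambda>k\<in>arr_idxs 1 1 R. case k of DX _ _ _ _ \<Rightarrow> 0 | AX _ _ r \<Rightarrow> dist (fst p) (a r)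
      | DY _ _ _ _ \<Rightarrow> 0 | AY _ _ r \<Rightarrow> dist (snd p) (b r))"

lemma anch_arrays_1: "anch_arrays T S a b 1 1 R z = gmap a b R (z 1)"
  unfolding anch_arrays_def gmap_def
  by (rule ext) (auto simp: arr_idxs_def)

lemma gmap_meas: "gmap a b R \<in> borel \<rightarrow>\<^sub>M PiM (arr_idxs 1 1 R) (\<lambda>_. borel)"
  unfolding gmap_def
proof (rule measurable_restrict)
  fix k show "(\<lambda>p. case k of DX _ _ _ _ \<Rightarrow> 0 | AX _ _ r \<Rightarrow> dist (fst p) (a r)
      | DY _ _ _ _ \<Rightarrow> 0 | AY _ _ r \<Rightarrow> dist (snd p) (b r)) \<in> borel \<rightarrow>\<^sub>M borel"
    by (cases k) (auto intro!: borel_measurable_continuous_onI continuous_intros)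
qed

lemma anch_proj_1:
  assumes "prob_space L" "sets L = sets borel"
  shows "anch_proj T S a b 1 1 R L = distr L (PiM (arr_idxs 1 1 R) (\<lambda>_. borel)) (gmap a b R)"
proof -
  let ?P = "PiM {1..1::nat} (\<lambda>_. L)" and ?N = "PiM (arr_idxs 1 1 R) (\<lambda>_. borel)"
  have m1: "(\<lambda>z. z 1) \<in> ?P \<rightarrow>\<^sub>M L" by (rule measurable_component_singleton) simp
  have m2: "gmap a b R \<in> L \<rightarrow>\<^sub>M ?N"
    using gmap_meas by (simp add: measurable_cong_sets[OF assms(2) refl])
  have "anch_proj T S a b 1 1 R L = distr ?P ?N (\<lambda>z. gmap a b R (z 1))"
    unfolding anch_proj_def anch_arrays_1 ..
  also have "\<dots> = distr (distr ?P L (\<lambda>z. z 1)) ?N (gmap a b R)"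
    using distr_distr[OF m2 m1] by (simp add: comp_def)
  also have "distr ?P L (\<lambda>z. z 1) = L"
    using distr_PiM_component[of "{1..1::nat}" "\<lambda>_. L" 1] assms by simp
  finally show ?thesis .
qed



definition delta :: "(nat \<Rightarrow> 'a::metric_space) \<Rightarrow> (nat \<Rightarrow> 'b::metric_space) \<Rightarrow> nat \<Rightarrow> 'a \<times> 'b \<Rightarrow> 'a \<times> 'b \<Rightarrow> real" where
  "delta a b R p q = (\<Sum>r\<in>{1..R}. \<bar>dist (fst p) (a r) - dist (fst q) (a r)\<bar> + \<bar>dist (snd p) (b r) - dist (snd q) (b r)\<bar>)"

lemma delta_ge:
  assumes "r \<in> {1..R}"
  shows "\<bar>dist (fst p) (a r) - dist (fst q) (a r)\<bar> \<le> delta a b R p q"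
    and "\<bar>dist (snd p) (b r) - dist (snd q) (b r)\<bar> \<le> delta a b R p q"
proof -
  have "\<bar>dist (fst p) (a r) - dist (fst q) (a r)\<bar> + \<bar>dist (snd p) (b r) - dist (snd q) (b r)\<bar> \<le> delta a b R p q"
    unfolding delta_def by (rule member_le_sum) (use assms in auto)
  then show "\<bar>dist (fst p) (a r) - dist (fst q) (a r)\<bar> \<le> delta a b R p q"
    and "\<bar>dist (snd p) (b r) - dist (snd q) (b r)\<bar> \<le> delta a b R p q" by linarith+
qed

lemma delta_mono: "R \<le> R' \<Longrightarrow> delta a b R p q \<le> delta a b R' p q"
  unfolding delta_def by (rule sum_mono2) auto

lemma delta_le: "delta a b R p q \<le> 2 * real R * dist p q"
proof -
  have "delta a b R p q \<le> (\<Sum>r\<in>{1..R}. 2 * dist p q)"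
    unfolding delta_def
  proof (rule sum_mono)
    fix r
    have "\<bar>dist (fst p) (a r) - dist (fst q) (a r)\<bar> \<le> dist (fst p) (fst q)"
      by (metis abs_dist_diff_le dist_commute)
    moreover have "\<bar>dist (snd p) (b r) - dist (snd q) (b r)\<bar> \<le> dist (snd p) (snd q)"
      by (metis abs_dist_diff_le dist_commute)
    moreover note dist_fst_le[of p q] dist_snd_le[of p q]
    ultimately show "\<bar>dist (fst p) (a r) - dist (fst q) (a r)\<bar> + \<bar>dist (snd p) (b r) - dist (snd q) (b r)\<bar> \<le> 2 * dist p q"
      by linarith
  qed
  then show ?thesis by simp
qed

lemma limit_arg:
  fixes qs :: "nat \<Rightarrow> 'a::metric_space \<times> 'b::metric_space"
  assumes cC: "compact C" and qC: "range qs \<subseteq> C"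
    and pK: "fst p \<in> closure (a ` {1..})" "snd p \<in> closure (b ` {1..})"
    and E: "\<And>R j. \<exists>i. delta a b (Suc R) p (qs i) < 1 / Suc j"
  shows "p \<in> C"
proof -
  obtain ii where ii: "\<And>R. delta a b (Suc R) p (qs (ii R)) < 1 / Suc R"
  proof -
    have "\<forall>R. \<exists>i. delta a b (Suc R) p (qs i) < 1 / Suc R" using E by blast
    then show ?thesis using that by metis
  qed
  define q where "q R = qs (ii R)" for R
  have q: "\<And>R. q R \<in> C" "\<And>R. delta a b (Suc R) p (q R) < 1 / Suc R"
    using ii qC by (auto simp: q_def)
  obtain l \<sigma> where l: "l \<in> C" "strict_mono \<sigma>" "(q \<circ> \<sigma>) \<longlonglongrightarrow> l"
    using cC q(1) unfolding compact_eq_seq_compact_metric by (metis seq_compactE)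
  have lim0: "(\<lambda>n. 1 / real (Suc (\<sigma> n))) \<longlonglongrightarrow> 0"
  proof -
    have "(\<lambda>n. 1 / real (Suc n)) \<longlonglongrightarrow> 0" by (rule LIMSEQ_Suc[OF lim_inverse_n'])
    then show ?thesis using LIMSEQ_subseq_LIMSEQ[OF _ l(2)] by (simp add: comp_def)
  qed
  have ev: "eventually (\<lambda>n. r \<in> {1..Suc (\<sigma> n)}) sequentially" if "r \<ge> 1" for r
  proof (rule eventually_sequentiallyI[of r])
    fix n assume "r \<le> n"
    then show "r \<in> {1..Suc (\<sigma> n)}" using seq_suble[OF l(2), of n] that by auto
  qed
  have lq: "((\<lambda>n. q (\<sigma> n)) \<longlonglongrightarrow> l)" using l(3) by (simp add: comp_def)
  have "fst p = fst l"
  proof (rule dist_anchor_inj[OF pK(1)])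
    fix r :: nat assume r: "r \<ge> 1"
    have t1: "(\<lambda>n. dist (fst (q (\<sigma> n))) (a r)) \<longlonglongrightarrow> dist (fst l) (a r)"
      by (intro tendsto_intros lq)
    have "(\<lambda>n. dist (fst (q (\<sigma> n))) (a r) - dist (fst p) (a r)) \<longlonglongrightarrow> 0"
    proof (rule Lim_null_comparison[OF _ lim0])
      show "\<forall>\<^sub>F n in sequentially. norm (dist (fst (q (\<sigma> n))) (a r) - dist (fst p) (a r)) \<le> 1 / real (Suc (\<sigma> n))"
        using ev[OF r]
      proof eventually_elim
        case (elim n)
        have "\<bar>dist (fst p) (a r) - dist (fst (q (\<sigma> n))) (a r)\<bar> \<le> delta a b (Suc (\<sigma> n)) p (q (\<sigma> n))"
          by (rule delta_ge(1)[OF elim])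
        with q(2)[of "\<sigma> n"] show ?case by simp
      qed
    qed
    then have "(\<lambda>n. dist (fst (q (\<sigma> n))) (a r)) \<longlonglongrightarrow> dist (fst p) (a r)"
      by (simp add: LIM_zero_iff)
    from LIMSEQ_unique[OF this t1] show "dist (fst p) (a r) = dist (fst l) (a r)" .
  qed
  moreover have "snd p = snd l"
  proof (rule dist_anchor_inj[OF pK(2)])
    fix r :: nat assume r: "r \<ge> 1"
    have t1: "(\<lambda>n. dist (snd (q (\<sigma> n))) (b r)) \<longlonglongrightarrow> dist (snd l) (b r)"
      by (intro tendsto_intros lq)
    have "(\<lambda>n. dist (snd (q (\<sigma> n))) (b r) - dist (snd p) (b r)) \<longlonglongrightarrow> 0"
    proof (rule Lim_null_comparison[OF _ lim0])
      show "\<forall>\<^sub>F n in sequentially. norm (dist (snd (q (\<sigma> n))) (b r) - dist (snd p) (b r)) \<le> 1 / real (Suc (\<sigma> n))"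
        using ev[OF r]
      proof eventually_elim
        case (elim n)
        have "\<bar>dist (snd p) (b r) - dist (snd (q (\<sigma> n))) (b r)\<bar> \<le> delta a b (Suc (\<sigma> n)) p (q (\<sigma> n))"
          by (rule delta_ge(2)[OF elim])
        with q(2)[of "\<sigma> n"] show ?case by simp
      qed
    qed
    then have "(\<lambda>n. dist (snd (q (\<sigma> n))) (b r)) \<longlonglongrightarrow> dist (snd p) (b r)"
      by (simp add: LIM_zero_iff)
    from LIMSEQ_unique[OF this t1] show "dist (snd p) (b r) = dist (snd l) (b r)" .
  qed
  ultimately have "p = l" by (simp add: prod_eq_iff)
  then show ?thesis using l(1) by simp
qed



lemma closed_eq:
  fixes L L' :: "('a::metric_space \<times> 'b::metric_space) measure"
  assumes cU: "compact (UNIV :: ('a \<times> 'b) set)"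
    and L: "prob_space L" "sets L = sets borel"
    and L': "prob_space L'" "sets L' = sets borel"
    and AEL: "AE p in L. fst p \<in> closure (a ` {1..}) \<and> snd p \<in> closure (b ` {1..})"
    and AEL': "AE p in L'. fst p \<in> closure (a ` {1..}) \<and> snd p \<in> closure (b ` {1..})"
    and eq: "\<And>R. R \<ge> 1 \<Longrightarrow> distr L (PiM (arr_idxs 1 1 R) (\<lambda>_. borel)) (gmap a b R)
               = distr L' (PiM (arr_idxs 1 1 R) (\<lambda>_. borel)) (gmap a b R)"
    and cC: "closed C"
  shows "emeasure L C = emeasure L' C"
proof (cases "C = {}")
  case True then show ?thesis by simp
next
  case False
  have kC: "compact C" using compact_Int_closed[OF cU cC] by simp
  obtain Q where Q: "countable Q" "Q \<subseteq> C" "C \<subseteq> closure Q"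
    using countable_dense_compact[OF kC] by blast
  have "Q \<noteq> {}" using Q False by auto
  define qs where "qs = from_nat_into Q"
  have rq: "range qs = Q" unfolding qs_def using range_from_nat_into[OF \<open>Q \<noteq> {}\<close> Q(1)] .
  define E where "E R = {p. \<forall>j::nat. \<exists>i::nat. delta a b R p (qs i) < 1 / Suc j}" for R
  define N where "N R = PiM (arr_idxs 1 1 R) (\<lambda>_. borel :: real measure)" for R
  define \<phi> where "\<phi> R i v = (\<Sum>r\<in>{1..R}. \<bar>v (AX 1 0 r) - dist (fst (qs i)) (a r)\<bar> + \<bar>v (AY 1 0 r) - dist (snd (qs i)) (b r)\<bar>)" for R i v
  define W where "W R = {v \<in> space (N R). \<forall>j::nat. \<exists>i::nat. \<phi> R i v < 1 / Suc j}" for R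
  have \<phi>m[measurable]: "\<phi> R i \<in> borel_measurable (N R)" for R i
    unfolding \<phi>_def
  proof (rule borel_measurable_sum)
    fix r assume r: "r \<in> {1..R}"
    have [measurable]: "(\<lambda>v. v (AX 1 0 r)) \<in> N R \<rightarrow>\<^sub>M borel" "(\<lambda>v. v (AY 1 0 r)) \<in> N R \<rightarrow>\<^sub>M borel"
      unfolding N_def using r by (auto intro!: measurable_component_singleton simp: arr_idxs_def)
    show "(\<lambda>v. \<bar>v (AX 1 0 r) - dist (fst (qs i)) (a r)\<bar> + \<bar>v (AY 1 0 r) - dist (snd (qs i)) (b r)\<bar>) \<in> borel_measurable (N R)"
      by measurable
  qed
  have Wm: "W R \<in> sets (N R)" for R
    unfolding W_def by measurable
  have spL: "space L = UNIV" "space L' = UNIV"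
    using L(2) L'(2) by (auto dest: sets_eq_imp_space_eq)
  have gm: "gmap a b R \<in> L \<rightarrow>\<^sub>M N R" "gmap a b R \<in> L' \<rightarrow>\<^sub>M N R" for R
    unfolding N_def using gmap_meas
    by (simp_all add: measurable_cong_sets[OF L(2) refl] measurable_cong_sets[OF L'(2) refl])
  have pre: "gmap a b R -` W R \<inter> space L = E R" "gmap a b R -` W R \<inter> space L' = E R" for R
  proof -
    have "\<phi> R i (gmap a b R p) = delta a b R p (qs i)" for i p
      unfolding \<phi>_def delta_def
      by (rule sum.cong) (auto simp: gmap_def arr_idxs_def)
    moreover have "gmap a b R p \<in> space (N R)" for p
      using measurable_space[OF gm(1)] spL by auto
    ultimately show "gmap a b R -` W R \<inter> space L = E R" "gmap a b R -` W R \<inter> space L' = E R"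
      by (auto simp: W_def E_def spL)
  qed
  have Es: "E R \<in> sets L" "E R \<in> sets L'" for R
    using measurable_sets[OF gm(1) Wm] measurable_sets[OF gm(2) Wm] pre by metis+
  have eqE: "emeasure L (E R) = emeasure L' (E R)" if "R \<ge> 1" for R
  proof -
    have "emeasure L (E R) = emeasure (distr L (N R) (gmap a b R)) (W R)"
      using emeasure_distr[OF gm(1) Wm] pre by simp
    also have "\<dots> = emeasure (distr L' (N R) (gmap a b R)) (W R)"
      using eq[OF that] by (simp add: N_def)
    also have "\<dots> = emeasure L' (E R)"
      using emeasure_distr[OF gm(2) Wm] pre by simp
    finally show ?thesis .
  qed
  define F where "F i = E (Suc i)" for i
  have decF: "decseq F"
  proof (rule decseq_SucI)
    fix i show "F (Suc i) \<subseteq> F i"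
    proof
      fix p assume "p \<in> F (Suc i)"
      then have h: "\<And>j. \<exists>k. delta a b (Suc (Suc i)) p (qs k) < 1 / Suc j"
        unfolding F_def E_def by blast
      have "\<exists>k. delta a b (Suc i) p (qs k) < 1 / Suc j" for j
        using h[of j] delta_mono[of "Suc i" "Suc (Suc i)" a b p] by (meson le_SucI order_refl le_less_trans)
      then show "p \<in> F i" unfolding F_def E_def by blast
    qed
  qed
  have CE: "p \<in> E R" if pC: "p \<in> C" for p R
    unfolding E_def
  proof (intro CollectI allI)
    fix j :: nat
    define \<epsilon> where "\<epsilon> = 1 / (Suc j * (2 * real R + 1))"
    have "\<epsilon> > 0" by (simp add: \<epsilon>_def)
    then obtain q where q: "q \<in> Q" "dist q p < \<epsilon>"
      using Q(3) pC closure_approachable[of p Q] by blast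
    then obtain i where i: "qs i = q" using rq by blast
    have "delta a b R p (qs i) \<le> 2 * real R * dist p q"
      using delta_le i by simp
    also have "\<dots> \<le> 2 * real R * \<epsilon>"
      using q(2) by (intro mult_left_mono) (auto simp: dist_commute)
    also have "\<dots> = (2 * real R / (2 * real R + 1)) * (1 / Suc j)"
      unfolding \<epsilon>_def by (simp add: field_simps)
    also have "\<dots> < 1 * (1 / Suc j)"
      by (intro mult_strict_right_mono) auto
    also have "\<dots> = 1 / Suc j" by simp
    finally show "\<exists>i. delta a b R p (qs i) < 1 / Suc j" by blast
  qed
  have AEeq: "AE p in M. p \<in> C \<longleftrightarrow> p \<in> (\<Inter>i. F i)"
    if "AE p in M. fst p \<in> closure (a ` {1..}) \<and> snd p \<in> closure (b ` {1..})" for M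
    using that
  proof eventually_elim
    case (elim p)
    show ?case
    proof
      assume "p \<in> C" then show "p \<in> (\<Inter>i. F i)" using CE by (auto simp: F_def)
    next
      assume "p \<in> (\<Inter>i. F i)"
      then have "\<And>R j. \<exists>i. delta a b (Suc R) p (qs i) < 1 / Suc j"
        by (auto simp: F_def E_def)
      then show "p \<in> C" using limit_arg[OF kC _ elim[THEN conjunct1] elim[THEN conjunct2]] rq Q(2)
        by blast
    qed
  qed
  have Cs: "C \<in> sets L" "C \<in> sets L'" using cC L(2) L'(2) by auto
  have lim: "(\<lambda>i. emeasure M (F i)) \<longlonglongrightarrow> emeasure M C"
    if M: "prob_space M" "\<And>i. F i \<in> sets M" "C \<in> sets M"
       "AE p in M. fst p \<in> closure (a ` {1..}) \<and> snd p \<in> closure (b ` {1..})" for M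
  proof -
    interpret prob_space M by fact
    have "emeasure M C = emeasure M (\<Inter>i. F i)"
      by (rule emeasure_eq_AE[OF AEeq[OF M(4)] M(3)]) (use M(2) in auto)
    moreover have "(\<lambda>i. emeasure M (F i)) \<longlonglongrightarrow> emeasure M (\<Inter>i. F i)"
      by (rule Lim_emeasure_decseq) (use M(2) decF in auto)
    ultimately show ?thesis by simp
  qed
  have l1: "(\<lambda>i. emeasure L (F i)) \<longlonglongrightarrow> emeasure L C"
    using lim[OF L(1) _ Cs(1) AEL] Es(1) by (auto simp: F_def)
  have l2: "(\<lambda>i. emeasure L (F i)) \<longlonglongrightarrow> emeasure L' C"
    using lim[OF L'(1) _ Cs(2) AEL'] Es(2) eqE by (auto simp: F_def)
  show ?thesis using LIMSEQ_unique[OF l1 l2] .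
qed



lemma AE_marg:
  fixes L :: "('a::metric_space \<times> 'b::metric_space) measure"
  assumes "cmmps \<mu> T" "cmmps \<nu> S" "L \<in> joinings \<mu> T \<nu> S"
    and "msupp \<mu> \<subseteq> closure (a ` {1..})" "msupp \<nu> \<subseteq> closure (b ` {1..})"
  shows "AE p in L. fst p \<in> closure (a ` {1..}) \<and> snd p \<in> closure (b ` {1..})"
proof -
  have J: "prob_space L" "sets L = sets borel" "distr L borel fst = \<mu>" "distr L borel snd = \<nu>"
    using assms(3) by (auto simp: joinings_def)
  have mf: "fst \<in> L \<rightarrow>\<^sub>M borel" "snd \<in> L \<rightarrow>\<^sub>M borel"
    by (simp_all add: measurable_cong_sets[OF J(2) refl] borel_measurable_continuous_onI continuous_on_fst continuous_on_snd continuous_on_id)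
  have "AE x in \<mu>. x \<in> closure (a ` {1..})" using msupp_AE[OF assms(1)] assms(4) by auto
  then have "AE x in distr L borel fst. x \<in> closure (a ` {1..})" unfolding J(3) .
  then have 1: "AE p in L. fst p \<in> closure (a ` {1..})"
    by (subst (asm) AE_distr_iff[OF mf(1)]) auto
  have "AE x in \<nu>. x \<in> closure (b ` {1..})" using msupp_AE[OF assms(2)] assms(5) by auto
  then have "AE x in distr L borel snd. x \<in> closure (b ` {1..})" unfolding J(4) .
  then have 2: "AE p in L. snd p \<in> closure (b ` {1..})"
    by (subst (asm) AE_distr_iff[OF mf(2)]) auto
  from 1 2 show ?thesis by eventually_elim auto
qed

theorem theorem13:
  fixes \<mu> :: "'a::metric_space measure" and T :: "'a \<Rightarrow> 'a"
    and \<nu> :: "'b::metric_space measure" and S :: "'b \<Rightarrow> 'b"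
    and a :: "nat \<Rightarrow> 'a" and b :: "nat \<Rightarrow> 'b"
    and L L' :: "('a \<times> 'b) measure"
  assumes "cmmps \<mu> T" and "cmmps \<nu> S"
    and "a ` {1..} \<subseteq> msupp \<mu>" and "msupp \<mu> \<subseteq> closure (a ` {1..})"
    and "b ` {1..} \<subseteq> msupp \<nu>" and "msupp \<nu> \<subseteq> closure (b ` {1..})"
    and "L \<in> joinings \<mu> T \<nu> S" and "L' \<in> joinings \<mu> T \<nu> S"
    and "\<And>n m R. n \<ge> 1 \<Longrightarrow> m \<ge> 1 \<Longrightarrow> R \<ge> 1 \<Longrightarrow>
           anch_proj T S a b n m R L = anch_proj T S a b n m R L'"
  shows "L = L'"
proof -
  have J: "prob_space L" "sets L = sets borel" "prob_space L'" "sets L' = sets borel"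
    using assms(7,8) by (auto simp: joinings_def)
  have cU: "compact (UNIV :: ('a \<times> 'b) set)"
    using compact_Times[of "UNIV :: 'a set" "UNIV :: 'b set"] assms(1,2) by (simp add: cmmps_def)
  have eq: "distr L (PiM (arr_idxs 1 1 R) (\<lambda>_. borel)) (gmap a b R)
          = distr L' (PiM (arr_idxs 1 1 R) (\<lambda>_. borel)) (gmap a b R)" if "R \<ge> 1" for R
    using assms(9)[of 1 1 R] that anch_proj_1[OF J(1,2)] anch_proj_1[OF J(3,4)] by simp
  have ceq: "emeasure L C = emeasure L' C" if "closed C" for C
    by (rule closed_eq[OF cU J AE_marg[OF assms(1,2,7,4,6)] AE_marg[OF assms(1,2,8,4,6)] eq that])
  have sg: "sets L = sigma_sets UNIV (Collect closed)" "sets L' = sigma_sets UNIV (Collect closed)"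
    using J by (simp_all add: borel_eq_closed sets_measure_of)
  have spL: "space L = UNIV" using J(2) by (auto dest: sets_eq_imp_space_eq)
  show ?thesis
  proof (rule measure_eqI_generator_eq[OF _ _ _ sg, of "\<lambda>_. UNIV"])
    show "Int_stable (Collect closed)" by (auto simp: Int_stable_def)
    show "\<And>i. emeasure L UNIV \<noteq> \<infinity>"
      using prob_space.emeasure_space_1[OF J(1)] spL by simp
  qed (auto intro: ceq)
qed

end
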